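(* Let $0\le i\le m\le n$ and let $\Delta_\succ$ be the reverse lexicographic triangulation of the point configuration $\mathcal P(m,n)=\{e_a\oplus f_b:1\le a\le m,\,1\le b\le n\}\subset\mathbb R^m\oplus\mathbb R^n$ with respect to a total order of the points (identified with variables $x_{ab}\leftrightarrow e_a\oplus f_b$) in which $x_{11}\prec x_{22}\prec\cdots\prec x_{ii}$ and all remaining variables are larger than $x_{ii}$ and ordered arbitrarily among themselves. Then $x_{11},\dots,x_{ii}$ are cone points of $\Delta_\succ$. Moreover, if $i=m>1$, the simplicial complex obtained from $\Delta_\succ$ by removing $x_{11},\dots,x_{mm}$ is $\operatorname{core}(\Delta_\succ)$.
   Context: $e_a$, $f_b$ are standard unit vectors of $\mathbb R^m$, $\mathbb R^n$. Reverse lexicographic triangulation of a point configuration $\mathcal A=\{a_1\succ a_2\succ\cdots\succ a_N\}$: if $F_1,\dots,F_k$ are the facets of $\operatorname{conv}(\mathcal A)$ not containing $a_N$, then $\Delta_\succ(\mathcal A)$ has as maximal simplices the sets $G\cup\{a_N\}$ with $G$ a maximal simplex of $\Delta_\succ(\mathcal A\cap F_i)$ for some $i$ (recursively, with the induced order). A cone point of a simplicial complex is a vertex lying in every facet; $\operatorname{core}(\Delta)$ is the restriction of $\Delta$ to the vertices that are not cone points. *)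

theory Defs
  imports "HOL-Analysis.Analysis"
begin

text \<open>Reverse lexicographic triangulation of a labelled point configuration.
  Labels of type 'v, positions given by p, and strict total order prec on labels,
  where prec v w means v precedes w (v is smaller).\<close>

inductive revlex_max ::
  "('v \<Rightarrow> 'a::euclidean_space) \<Rightarrow> ('v \<Rightarrow> 'v \<Rightarrow> bool) \<Rightarrow> 'v set \<Rightarrow> 'v set \<Rightarrow> bool"
  for p prec where
  single: "revlex_max p prec {v} {v}"
| cone: "\<lbrakk> finite L; card L \<ge> 2; v \<in> L; \<forall>w\<in>L. w \<noteq> v \<longrightarrow> prec v w;
           F facet_of convex hull (p ` L); p v \<notin> F;
           revlex_max p prec {w \<in> L. p w \<in> F} G \<rbrakk>
         \<Longrightarrow> revlex_max p prec L (insert v G)"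

definition complex_of :: "'v set set \<Rightarrow> 'v set set" where
  "complex_of Fs = {\<sigma>. \<exists>F\<in>Fs. \<sigma> \<subseteq> F}"

definition revlex_complex ::
  "('v \<Rightarrow> 'a::euclidean_space) \<Rightarrow> ('v \<Rightarrow> 'v \<Rightarrow> bool) \<Rightarrow> 'v set \<Rightarrow> 'v set set" where
  "revlex_complex p prec L = complex_of {G. revlex_max p prec L G}"

definition vertices :: "'v set set \<Rightarrow> 'v set" where
  "vertices \<Delta> = {v. {v} \<in> \<Delta>}"

definition facets :: "'v set set \<Rightarrow> 'v set set" where
  "facets \<Delta> = {F \<in> \<Delta>. \<forall>G\<in>\<Delta>. F \<subseteq> G \<longrightarrow> G = F}"

definition cone_point :: "'v set set \<Rightarrow> 'v \<Rightarrow> bool" where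
  "cone_point \<Delta> v \<longleftrightarrow> v \<in> vertices \<Delta> \<and> (\<forall>F\<in>facets \<Delta>. v \<in> F)"

definition restrict_complex :: "'v set set \<Rightarrow> 'v set \<Rightarrow> 'v set set" where
  "restrict_complex \<Delta> W = {\<sigma> \<in> \<Delta>. \<sigma> \<subseteq> W}"

definition core :: "'v set set \<Rightarrow> 'v set set" where
  "core \<Delta> = restrict_complex \<Delta> {v \<in> vertices \<Delta>. \<not> cone_point \<Delta> v}"

definition delete_vertices :: "'v set set \<Rightarrow> 'v set \<Rightarrow> 'v set set" where
  "delete_vertices \<Delta> D = {\<sigma> \<in> \<Delta>. \<sigma> \<inter> D = {}}"

definition Ppt :: "'m::finite \<times> 'n::finite \<Rightarrow> (real^'m) \<times> (real^'n)" where
  "Ppt x = (axis (fst x) 1, axis (snd x) 1)"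

end

theory Submission
  imports Defs
begin

lemma Ppt_inj: "Ppt x = Ppt y \<Longrightarrow> x = y"
  by (cases x; cases y) (auto simp: Ppt_def axis_eq_axis)

lemma inner_row: "inner (axis a0 (1::real), 0::real^'n::finite) (Ppt (w::'m::finite \<times> 'n)) = (if fst w = a0 then 1 else 0)"
  by (cases w) (auto simp: Ppt_def inner_axis_axis)

lemma inner_col: "inner (0::real^'m::finite, axis b0 (1::real)) (Ppt (w::'m \<times> 'n::finite)) = (if snd w = b0 then 1 else 0)"
  by (cases w) (auto simp: Ppt_def inner_axis_axis)

lemma hyper_face:
  fixes L :: "('m::finite \<times> 'n::finite) set" and c
  assumes hc: "\<forall>w\<in>L. inner c (Ppt w) = (if w \<in> R then 1 else 0)"
  shows "(convex hull (Ppt ` L) \<inter> {x. inner c x = 0}) face_of convex hull (Ppt ` L)"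
    and "\<And>w. w \<in> L \<Longrightarrow> Ppt w \<in> convex hull (Ppt ` L) \<inter> {x. inner c x = 0} \<longleftrightarrow> w \<notin> R"
proof -
  have "convex hull (Ppt ` L) \<subseteq> {x. inner c x \<ge> 0}"
    by (rule hull_minimal) (use hc convex_halfspace_ge in auto)
  then show "(convex hull (Ppt ` L) \<inter> {x. inner c x = 0}) face_of convex hull (Ppt ` L)"
    by (intro face_of_Int_supporting_hyperplane_ge) auto
  fix w assume "w \<in> L"
  then show "Ppt w \<in> convex hull (Ppt ` L) \<inter> {x. inner c x = 0} \<longleftrightarrow> w \<notin> R"
    using hc by (auto intro: hull_inc)
qed

lemma facet_eq:
  fixes L :: "('m::finite \<times> 'n::finite) set" and c
  assumes F: "F facet_of convex hull (Ppt ` L)"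
    and hc: "\<forall>w\<in>L. inner c (Ppt w) = (if w \<in> R then 1 else 0)"
    and FL: "F = convex hull (Ppt ` L')" and L'L: "L' \<subseteq> L" and L'R: "L' \<inter> R = {}"
    and v: "v \<in> L" "v \<in> R"
  shows "{w\<in>L. Ppt w \<in> F} = L - R"
proof -
  define S where "S = convex hull (Ppt ` L)"
  define H where "H = S \<inter> {x. inner c x = 0}"
  have HS: "H face_of S" and Hw: "\<And>w. w \<in> L \<Longrightarrow> Ppt w \<in> H \<longleftrightarrow> w \<notin> R"
    using hyper_face[OF hc] unfolding S_def H_def by auto
  have cS: "convex S" unfolding S_def by simp
  have "Ppt ` L' \<subseteq> H" using Hw L'L L'R by blast
  then have FH: "F \<subseteq> H" unfolding FL
    by (rule hull_minimal) (use face_of_imp_convex[OF HS] in auto)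
  have FfH: "F face_of H"
    using face_of_subset[OF facet_of_imp_face_of[OF F[folded S_def]] FH face_of_imp_subset[OF HS]] .
  have "Ppt v \<in> S" unfolding S_def by (rule hull_inc) (use v in auto)
  then have "H \<noteq> S" using Hw[OF v(1)] v(2) by auto
  then have d1: "aff_dim H < aff_dim S" using face_of_aff_dim_lt[OF cS HS] by simp
  have "F = H"
  proof (rule ccontr)
    assume "F \<noteq> H"
    then have "aff_dim F < aff_dim H" using face_of_aff_dim_lt[OF face_of_imp_convex[OF HS] FfH] by simp
    with d1 F show False unfolding facet_of_def S_def by simp
  qed
  then show ?thesis using Hw by auto
qed

lemma shape:
  fixes A :: "'m::finite set" and B :: "'n::finite set"
  assumes v: "(a0, b0) \<in> A \<times> B" and F: "F facet_of convex hull (Ppt ` (A \<times> B))"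
    and nv: "Ppt (a0, b0) \<notin> F"
  shows "{w\<in>A \<times> B. Ppt w \<in> F} = (A - {a0}) \<times> B \<or> {w\<in>A \<times> B. Ppt w \<in> F} = A \<times> (B - {b0})"
proof -
  define L where "L = A \<times> B"
  define L' where "L' = {w\<in>L. Ppt w \<in> F}"
  define S where "S = convex hull (Ppt ` L)"
  have Ff: "F face_of S" using F facet_of_imp_face_of unfolding L_def S_def by blast
  have finL: "finite (Ppt ` L)" by simp
  obtain S' where S': "S' \<subseteq> Ppt ` L" "F = convex hull S'"
    using face_of_convex_hull_subset[OF finite_imp_compact[OF finL] Ff[unfolded S_def]] by blast
  have "S' \<subseteq> F" unfolding S'(2) by (rule hull_subset)
  then have "S' \<subseteq> Ppt ` L'" using S'(1) unfolding L'_def by blast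
  then have "convex hull S' \<subseteq> convex hull (Ppt ` L')" by (rule hull_mono)
  then have "F \<subseteq> convex hull (Ppt ` L')" using S'(2) by simp
  moreover have "convex hull (Ppt ` L') \<subseteq> F"
    by (rule hull_minimal) (auto simp: L'_def intro: face_of_imp_convex[OF Ff])
  ultimately have FL: "F = convex hull (Ppt ` L')" by (rule subset_antisym)
  have cF: "convex F" using face_of_imp_convex[OF Ff] .
  have mid: "(\<forall>w\<in>L'. fst w \<noteq> a0) \<or> (\<forall>w\<in>L'. snd w \<noteq> b0)"
  proof (rule ccontr)
    assume "\<not> ?thesis"
    then obtain b a where 1: "(a0, b) \<in> L'" and 2: "(a, b0) \<in> L'" by auto
    have "a \<noteq> a0" using 2 nv unfolding L'_def by auto
    have inL: "(a, b) \<in> L" "(a0,b0) \<in> L" using 1 2 v unfolding L'_def L_def by auto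
    have p1: "Ppt (a0, b) \<in> F" using 1 unfolding L'_def by simp
    have p2: "Ppt (a, b0) \<in> F" using 2 unfolding L'_def by simp
    have "closed_segment (Ppt (a0, b)) (Ppt (a, b0)) \<subseteq> F"
      using cF p1 p2 unfolding convex_contains_segment by blast
    then have "midpoint (Ppt (a0, b)) (Ppt (a, b0)) \<in> F"
      using midpoint_in_closed_segment by blast
    moreover have "midpoint (Ppt (a0, b)) (Ppt (a, b0)) = midpoint (Ppt (a0, b0)) (Ppt (a, b))"
      by (simp add: midpoint_def Ppt_def algebra_simps)
    ultimately have m: "midpoint (Ppt (a0, b0)) (Ppt (a, b)) \<in> F" by simp
    have "Ppt (a0, b0) \<noteq> Ppt (a, b)" using Ppt_inj \<open>a \<noteq> a0\<close> by blast
    then have m2: "midpoint (Ppt (a0, b0)) (Ppt (a, b)) \<in> open_segment (Ppt (a0, b0)) (Ppt (a, b))"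
      by simp
    have "Ppt (a0, b0) \<in> S" "Ppt (a, b) \<in> S" unfolding S_def using inL by (auto intro: hull_inc)
    then have "Ppt (a0, b0) \<in> F" using face_ofD[OF Ff m2] m by blast
    with nv show False by simp
  qed
  then show ?thesis
  proof
    assume h: "\<forall>w\<in>L'. fst w \<noteq> a0"
    have hc: "\<forall>w\<in>L. inner (axis a0 1, 0) (Ppt w) = (if w \<in> {w. fst w = a0} then 1 else 0)"
      by (simp add: inner_row)
    have sub: "{w\<in>L. Ppt w \<in> F} \<subseteq> L" by blast
    have disj: "{w\<in>L. Ppt w \<in> F} \<inter> {w. fst w = a0} = {}" using h unfolding L'_def by blast
    have vL: "(a0,b0) \<in> L" using v unfolding L_def .
    have "L' = L - {w. fst w = a0}"
      unfolding L'_def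
      by (rule facet_eq[OF F[folded L_def] hc FL[unfolded L'_def] sub disj vL]) simp
    moreover have "L - {w. fst w = a0} = (A - {a0}) \<times> B" unfolding L_def by auto
    ultimately show ?thesis unfolding L'_def L_def by simp
  next
    assume h: "\<forall>w\<in>L'. snd w \<noteq> b0"
    have hc: "\<forall>w\<in>L. inner (0, axis b0 1) (Ppt w) = (if w \<in> {w. snd w = b0} then 1 else 0)"
      by (simp add: inner_col)
    have sub: "{w\<in>L. Ppt w \<in> F} \<subseteq> L" by blast
    have disj: "{w\<in>L. Ppt w \<in> F} \<inter> {w. snd w = b0} = {}" using h unfolding L'_def by blast
    have vL: "(a0,b0) \<in> L" using v unfolding L_def .
    have "L' = L - {w. snd w = b0}"
      unfolding L'_def
      by (rule facet_eq[OF F[folded L_def] hc FL[unfolded L'_def] sub disj vL]) simp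
    moreover have "L - {w. snd w = b0} = A \<times> (B - {b0})" unfolding L_def by auto
    ultimately show ?thesis unfolding L'_def L_def by simp
  qed
qed

lemma facet_exists:
  fixes L :: "('m::finite \<times> 'n::finite) set" and c
  assumes hc: "\<forall>w\<in>L. inner c (Ppt w) = (if w \<in> R then 1 else 0)"
    and v: "v \<in> L" "v \<in> R" and w1: "w1 \<in> L" "w1 \<notin> R"
  shows "\<exists>F. F facet_of convex hull (Ppt ` L) \<and> Ppt v \<notin> F \<and> L - R \<subseteq> {w\<in>L. Ppt w \<in> F}"
proof -
  define S where "S = convex hull (Ppt ` L)"
  define H where "H = S \<inter> {x. inner c x = 0}"
  have HS: "H face_of S" and Hw: "\<And>w. w \<in> L \<Longrightarrow> Ppt w \<in> H \<longleftrightarrow> w \<notin> R"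
    using hyper_face[OF hc] unfolding S_def H_def by auto
  have "Ppt v \<in> S" unfolding S_def by (rule hull_inc) (use v in auto)
  then have "H \<noteq> S" using Hw[OF v(1)] v(2) by auto
  moreover have "H \<noteq> {}" using Hw[OF w1(1)] w1(2) by auto
  moreover have "polyhedron S" unfolding S_def by (simp add: polyhedron_convex_hull)
  ultimately have "H = \<Inter>{F. F facet_of S \<and> H \<subseteq> F}" using face_of_polyhedron HS by blast
  moreover have "Ppt v \<notin> H" using Hw v by auto
  ultimately obtain F where "F facet_of S" "H \<subseteq> F" "Ppt v \<notin> F" by blast
  then show ?thesis using Hw unfolding S_def by blast
qed

lemma row_facet:
  fixes A :: "'m::finite set" and B :: "'n::finite set"
  assumes v: "(a0, b0) \<in> A \<times> B" and a1: "a1 \<in> A" "a1 \<noteq> a0"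
  shows "\<exists>F. F facet_of convex hull (Ppt ` (A \<times> B)) \<and> Ppt (a0,b0) \<notin> F
           \<and> {w\<in>A \<times> B. Ppt w \<in> F} = (A - {a0}) \<times> B"
proof -
  obtain F where F: "F facet_of convex hull (Ppt ` (A \<times> B))" "Ppt (a0,b0) \<notin> F"
     "A \<times> B - {w. fst w = a0} \<subseteq> {w\<in>A \<times> B. Ppt w \<in> F}"
  proof -
    have hc: "\<forall>w\<in>A \<times> B. inner (axis a0 1, 0) (Ppt w) = (if w \<in> {w. fst w = a0} then 1 else 0)"
      by (simp add: inner_row)
    have "\<exists>F. F facet_of convex hull (Ppt ` (A \<times> B)) \<and> Ppt (a0,b0) \<notin> F \<and> A \<times> B - {w. fst w = a0} \<subseteq> {w\<in>A \<times> B. Ppt w \<in> F}"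
      by (rule facet_exists[OF hc, of "(a0,b0)" "(a1,b0)"]) (use v a1 in auto)
    then show thesis using that by blast
  qed
  have "(a1, b0) \<in> {w\<in>A \<times> B. Ppt w \<in> F}" using F(3) v a1 by auto
  moreover have "(a1, b0) \<notin> A \<times> (B - {b0})" by simp
  ultimately have "{w\<in>A \<times> B. Ppt w \<in> F} = (A - {a0}) \<times> B" using shape[OF v F(1,2)] by metis
  with F show ?thesis by blast
qed

lemma col_facet:
  fixes A :: "'m::finite set" and B :: "'n::finite set"
  assumes v: "(a0, b0) \<in> A \<times> B" and b1: "b1 \<in> B" "b1 \<noteq> b0"
  shows "\<exists>F. F facet_of convex hull (Ppt ` (A \<times> B)) \<and> Ppt (a0,b0) \<notin> F
           \<and> {w\<in>A \<times> B. Ppt w \<in> F} = A \<times> (B - {b0})"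
proof -
  obtain F where F: "F facet_of convex hull (Ppt ` (A \<times> B))" "Ppt (a0,b0) \<notin> F"
     "A \<times> B - {w. snd w = b0} \<subseteq> {w\<in>A \<times> B. Ppt w \<in> F}"
  proof -
    have hc: "\<forall>w\<in>A \<times> B. inner (0, axis b0 1) (Ppt w) = (if w \<in> {w. snd w = b0} then 1 else 0)"
      by (simp add: inner_col)
    have "\<exists>F. F facet_of convex hull (Ppt ` (A \<times> B)) \<and> Ppt (a0,b0) \<notin> F \<and> A \<times> B - {w. snd w = b0} \<subseteq> {w\<in>A \<times> B. Ppt w \<in> F}"
      by (rule facet_exists[OF hc, of "(a0,b0)" "(a0,b1)"]) (use v b1 in auto)
    then show thesis using that by blast
  qed
  have "(a0, b1) \<in> {w\<in>A \<times> B. Ppt w \<in> F}" using F(3) v b1 by auto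
  moreover have "(a0, b1) \<notin> (A - {a0}) \<times> B" by simp
  ultimately have "{w\<in>A \<times> B. Ppt w \<in> F} = A \<times> (B - {b0})" using shape[OF v F(1,2)] by metis
  with F show ?thesis by blast
qed

lemma revlex_sub: "revlex_max p prec L G \<Longrightarrow> G \<subseteq> L \<and> finite G"
  by (induction rule: revlex_max.induct) auto

lemma card2: "finite L \<Longrightarrow> x \<in> L \<Longrightarrow> y \<in> L \<Longrightarrow> x \<noteq> y \<Longrightarrow> 2 \<le> card L"
  using card_mono[of L "{x,y}"] by simp

lemma min_exists:
  assumes tr: "transp prec" and tot: "\<forall>x y. x \<noteq> y \<longrightarrow> prec x y \<or> prec y x"
  shows "finite S \<Longrightarrow> S \<noteq> {} \<Longrightarrow> \<exists>v\<in>S. \<forall>w\<in>S. w \<noteq> v \<longrightarrow> prec v w"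
proof (induction S rule: finite_ne_induct)
  case (singleton x) then show ?case by auto
next
  case (insert x F)
  then obtain v where v: "v \<in> F" "\<forall>w\<in>F. w \<noteq> v \<longrightarrow> prec v w" by blast
  have "x \<noteq> v" using v insert by auto
  then consider "prec x v" | "prec v x" using tot by blast
  then show ?case
  proof cases
    case 1
    then have "\<forall>w\<in>insert x F. w \<noteq> x \<longrightarrow> prec x w"
      using v tr by (metis insertE transpD)
    then show ?thesis by blast
  next
    case 2
    then show ?thesis using v by blast
  qed
qed

lemma exists_max:
  fixes A :: "'m::finite set" and B :: "'n::finite set" and prec
  assumes tr: "transp prec" and tot: "\<forall>x y. x \<noteq> y \<longrightarrow> prec x y \<or> prec y x"
  shows "A \<noteq> {} \<Longrightarrow> B \<noteq> {} \<Longrightarrow> \<exists>G. revlex_max Ppt prec (A \<times> B) G"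
proof (induction "card (A \<times> B)" arbitrary: A B rule: less_induct)
  case less
  have fin: "finite (A \<times> B)" by simp
  obtain v where v: "v \<in> A \<times> B" "\<forall>w\<in>A \<times> B. w \<noteq> v \<longrightarrow> prec v w"
    using min_exists[OF tr tot fin] less.prems by auto
  obtain a0 b0 where v0: "v = (a0, b0)" by (cases v)
  have a0: "a0 \<in> A" and b0: "b0 \<in> B" using v v0 by auto
  show ?case
  proof (cases "\<exists>a1\<in>A. a1 \<noteq> a0")
    case True
    then obtain a1 where a1: "a1 \<in> A" "a1 \<noteq> a0" by blast
    obtain F where F: "F facet_of convex hull (Ppt ` (A \<times> B))" "Ppt (a0,b0) \<notin> F"
      "{w\<in>A \<times> B. Ppt w \<in> F} = (A - {a0}) \<times> B"
      using row_facet[of a0 b0 A B a1] a0 b0 a1 by blast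
    have "card ((A - {a0}) \<times> B) < card (A \<times> B)"
      by (rule psubset_card_mono) (use a0 b0 in auto)
    moreover have "A - {a0} \<noteq> {}" using a1 by auto
    ultimately obtain G where G: "revlex_max Ppt prec ((A - {a0}) \<times> B) G"
      using less.hyps less.prems by blast
    have "revlex_max Ppt prec (A \<times> B) (insert v G)"
    proof (rule revlex_max.cone)
      show "finite (A \<times> B)" by (fact fin)
      show "v \<in> A \<times> B" by (fact v(1))
      show "\<forall>w\<in>A \<times> B. w \<noteq> v \<longrightarrow> prec v w" by (fact v(2))
      show "2 \<le> card (A \<times> B)" using card2[OF fin v(1), of "(a1,b0)"] a1 b0 v0 by auto
      show "F facet_of convex hull (Ppt ` (A \<times> B))" by fact
      show "Ppt v \<notin> F" using F v0 by simp
      show "revlex_max Ppt prec {w \<in> A \<times> B. Ppt w \<in> F} G" using F G by simp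
    qed
    then show ?thesis by blast
  next
    case False
    show ?thesis
    proof (cases "\<exists>b1\<in>B. b1 \<noteq> b0")
      case True
      then obtain b1 where b1: "b1 \<in> B" "b1 \<noteq> b0" by blast
      obtain F where F: "F facet_of convex hull (Ppt ` (A \<times> B))" "Ppt (a0,b0) \<notin> F"
        "{w\<in>A \<times> B. Ppt w \<in> F} = A \<times> (B - {b0})"
        using col_facet[of a0 b0 A B b1] a0 b0 b1 by blast
      have "card (A \<times> (B - {b0})) < card (A \<times> B)"
        by (rule psubset_card_mono) (use a0 b0 in auto)
      moreover have "B - {b0} \<noteq> {}" using b1 by auto
      ultimately obtain G where G: "revlex_max Ppt prec (A \<times> (B - {b0})) G"
        using less.hyps less.prems by blast
      have "revlex_max Ppt prec (A \<times> B) (insert v G)"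
      proof (rule revlex_max.cone)
      show "finite (A \<times> B)" by (fact fin)
      show "v \<in> A \<times> B" by (fact v(1))
      show "\<forall>w\<in>A \<times> B. w \<noteq> v \<longrightarrow> prec v w" by (fact v(2))
        show "2 \<le> card (A \<times> B)" using card2[OF fin v(1), of "(a0,b1)"] a0 b1 v0 by auto
        show "F facet_of convex hull (Ppt ` (A \<times> B))" by fact
        show "Ppt v \<notin> F" using F v0 by simp
        show "revlex_max Ppt prec {w \<in> A \<times> B. Ppt w \<in> F} G" using F G by simp
      qed
      then show ?thesis by blast
    next
      case False2: False
      have "A = {a0}" using False a0 by blast
      moreover have "B = {b0}" using False2 b0 by blast
      ultimately have "A \<times> B = {v}" using v0 by simp
      then show ?thesis using revlex_max.single by metis
    qed
  qed
qed

lemma card_max: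
  fixes prec
  shows "revlex_max Ppt prec L G \<Longrightarrow> L = (A :: 'm::finite set) \<times> (B :: 'n::finite set) \<Longrightarrow> card G + 1 = card A + card B"
proof (induction arbitrary: A B rule: revlex_max.induct)
  case (single v)
  obtain a b where vab: "v = (a,b)" by (cases v)
  have ab: "a \<in> A" "b \<in> B" using single vab by (metis insertI1 mem_Sigma_iff)+
  have "A \<subseteq> {a}"
  proof
    fix x assume "x \<in> A"
    then have "(x, b) \<in> {v}" using single ab by simp
    then show "x \<in> {a}" using vab by simp
  qed
  moreover have "B \<subseteq> {b}"
  proof
    fix x assume "x \<in> B"
    then have "(a, x) \<in> {v}" using single ab by simp
    then show "x \<in> {b}" using vab by simp
  qed
  ultimately have "A = {a}" "B = {b}" using ab by auto
  then show ?case by simp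
next
  case (cone L v F G)
  obtain a0 b0 where v0: "v = (a0, b0)" by (cases v)
  have vAB: "(a0, b0) \<in> A \<times> B" using cone v0 by simp
  have dj: "{w\<in>A \<times> B. Ppt w \<in> F} = (A - {a0}) \<times> B \<or> {w\<in>A \<times> B. Ppt w \<in> F} = A \<times> (B - {b0})"
    using shape[OF vAB] cone v0 by simp
  have sub: "G \<subseteq> {w \<in> L. Ppt w \<in> F}" "finite G" using revlex_sub[OF cone.hyps(7)] by auto
  have "v \<notin> G" using sub cone.hyps(6) by auto
  then have cG: "card (insert v G) = card G + 1" using sub by simp
  have a0: "a0 \<in> A" and b0: "b0 \<in> B" using vAB by auto
  from dj show ?case
  proof
    assume "{w\<in>A \<times> B. Ppt w \<in> F} = (A - {a0}) \<times> B"
    then have "{w\<in>L. Ppt w \<in> F} = (A - {a0}) \<times> B" using cone.prems by simp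
    then have "card G + 1 = card (A - {a0}) + card B" by (rule cone.IH)
    moreover have "card (A - {a0}) + 1 = card A" using card_Suc_Diff1[of A a0] a0 by simp
    ultimately show ?thesis using cG by simp
  next
    assume "{w\<in>A \<times> B. Ppt w \<in> F} = A \<times> (B - {b0})"
    then have "{w\<in>L. Ppt w \<in> F} = A \<times> (B - {b0})" using cone.prems by simp
    then have "card G + 1 = card A + card (B - {b0})" by (rule cone.IH)
    moreover have "card (B - {b0}) + 1 = card B" using card_Suc_Diff1[of B b0] b0 by simp
    ultimately show ?thesis using cG by simp
  qed
qed

locale LS =
  fixes i :: nat and \<alpha> :: "nat \<Rightarrow> 'm::finite" and \<beta> :: "nat \<Rightarrow> 'n::finite"
    and prec :: "'m \<times> 'n \<Rightarrow> 'm \<times> 'n \<Rightarrow> bool"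
  assumes inja: "inj_on \<alpha> {1..i}" and injb: "inj_on \<beta> {1..i}"
    and tr: "transp prec" and irr: "irreflp prec"
    and tot: "\<forall>x y. x \<noteq> y \<longrightarrow> prec x y \<or> prec y x"
    and A8: "\<forall>k\<in>{1..i}. \<forall>l\<in>{1..i}. k < l \<longrightarrow> prec (\<alpha> k, \<beta> k) (\<alpha> l, \<beta> l)"
    and A9: "\<forall>k\<in>{1..i}. \<forall>x. x \<notin> (\<lambda>l. (\<alpha> l, \<beta> l)) ` {1..i} \<longrightarrow> prec (\<alpha> k, \<beta> k) x"
begin

lemma min_is:
  assumes "k \<in> {1..i}" "\<forall>j\<in>{1..<k}. (\<alpha> j, \<beta> j) \<notin> L" "w \<in> L" "w \<noteq> (\<alpha> k, \<beta> k)"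
  shows "prec (\<alpha> k, \<beta> k) w"
proof (cases "w \<in> (\<lambda>l. (\<alpha> l, \<beta> l)) ` {1..i}")
  case True
  then obtain j where j: "j \<in> {1..i}" "w = (\<alpha> j, \<beta> j)" by blast
  have "j \<noteq> k" using assms(4) j by auto
  moreover have "\<not> j < k" using assms(2,3) j by auto
  ultimately have "k < j" by simp
  then show ?thesis using A8 assms(1) j by auto
next
  case False
  then show ?thesis using A9 assms(1) by blast
qed

lemma v_eq:
  assumes "k \<in> {1..i}" "\<forall>j\<in>{1..<k}. (\<alpha> j, \<beta> j) \<notin> L" "(\<alpha> k, \<beta> k) \<in> L" "v \<in> L"
    "\<forall>w\<in>L. w \<noteq> v \<longrightarrow> prec v w"
  shows "v = (\<alpha> k, \<beta> k)"
proof (rule ccontr)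
  assume ne: "v \<noteq> (\<alpha> k, \<beta> k)"
  have "prec v (\<alpha> k, \<beta> k)" using assms(3,5) ne by auto
  moreover have "prec (\<alpha> k, \<beta> k) v" using min_is[OF assms(1,2,4)] ne by auto
  ultimately have "prec v v" using tr by (meson transpD)
  with irr show False by (metis irreflp_def)
qed

lemma contains:
  "revlex_max Ppt prec L G \<Longrightarrow> L = A \<times> B \<Longrightarrow> 1 \<le> k \<Longrightarrow> (\<forall>j\<in>{k..i}. (\<alpha> j, \<beta> j) \<in> L)
   \<Longrightarrow> (\<forall>j\<in>{1..<k}. (\<alpha> j, \<beta> j) \<notin> L) \<Longrightarrow> \<forall>j\<in>{k..i}. (\<alpha> j, \<beta> j) \<in> G"
proof (induction arbitrary: A B k rule: revlex_max.induct)
  case (single v)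
  then show ?case by simp
next
  case (cone L v F G)
  show ?case
  proof (cases "k \<le> i")
    case False
    then show ?thesis by simp
  next
    case True
    have k: "k \<in> {1..i}" using True cone.prems(2) by simp
    have xk: "(\<alpha> k, \<beta> k) \<in> L" using cone.prems(3) True by simp
    have vk: "v = (\<alpha> k, \<beta> k)" by (rule v_eq[OF k cone.prems(4) xk cone.hyps(3) cone.hyps(4)])
    have vAB: "(\<alpha> k, \<beta> k) \<in> A \<times> B" using xk cone.prems(1) by simp
    have dj: "{w\<in>L. Ppt w \<in> F} = (A - {\<alpha> k}) \<times> B \<or> {w\<in>L. Ppt w \<in> F} = A \<times> (B - {\<beta> k})"
      using shape[OF vAB] cone.hyps(5,6) cone.prems(1) vk by simp
    have notin: "v \<notin> {w\<in>L. Ppt w \<in> F}" using cone.hyps(6) by simp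
    have rest: "\<forall>j\<in>{Suc k..i}. (\<alpha> j, \<beta> j) \<in> G"
    proof -
      obtain A' B' where AB': "{w\<in>L. Ppt w \<in> F} = A' \<times> B'" using dj by blast
      show ?thesis
      proof (rule cone.IH[OF AB'])
        show "1 \<le> Suc k" by simp
        show "\<forall>j\<in>{Suc k..i}. (\<alpha> j, \<beta> j) \<in> {w\<in>L. Ppt w \<in> F}"
        proof
          fix j assume j: "j \<in> {Suc k..i}"
          have "\<alpha> j \<noteq> \<alpha> k" using inj_onD[OF inja, of j k] j k by auto
          moreover have "\<beta> j \<noteq> \<beta> k" using inj_onD[OF injb, of j k] j k by auto
          moreover have "(\<alpha> j, \<beta> j) \<in> L" using cone.prems(3) j by auto
          ultimately show "(\<alpha> j, \<beta> j) \<in> {w\<in>L. Ppt w \<in> F}" using dj cone.prems(1) by auto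
        qed
        show "\<forall>j\<in>{1..<Suc k}. (\<alpha> j, \<beta> j) \<notin> {w\<in>L. Ppt w \<in> F}"
        proof
          fix j assume j: "j \<in> {1..<Suc k}"
          show "(\<alpha> j, \<beta> j) \<notin> {w\<in>L. Ppt w \<in> F}"
          proof (cases "j = k")
            case True
            then show ?thesis using notin vk by simp
          next
            case False
            then have "j \<in> {1..<k}" using j by auto
            then show ?thesis using cone.prems(4) by auto
          qed
        qed
      qed
    qed
    show ?thesis
    proof
      fix j assume "j \<in> {k..i}"
      then have "j = k \<or> j \<in> {Suc k..i}" by auto
      then show "(\<alpha> j, \<beta> j) \<in> insert v G" using vk rest by auto
    qed
  qed
qed

lemma avoid:
  assumes im: "i = CARD('m)" and m1: "1 < CARD('m)" and mn: "CARD('m) \<le> CARD('n)"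
    and y: "y \<notin> (\<lambda>l. (\<alpha> l, \<beta> l)) ` {1..i}"
  shows "\<exists>G. revlex_max Ppt prec UNIV G \<and> y \<notin> G"
proof -
  have "\<alpha> ` {1..i} = UNIV"
  proof (rule card_subset_eq)
    show "finite (UNIV::'m set)" by simp
    show "\<alpha> ` {1..i} \<subseteq> UNIV" by simp
    show "card (\<alpha> ` {1..i}) = card (UNIV::'m set)" using card_image[OF inja] im by simp
  qed
  then obtain k0 where k0: "k0 \<in> {1..i}" "fst y = \<alpha> k0" by (metis UNIV_I imageE)
  define Bk where "Bk k = UNIV - \<beta> ` {1..<k}" for k
  have bkk: "\<beta> k \<in> Bk k" if "k \<in> {1..i}" for k
  proof -
    have "\<beta> k \<notin> \<beta> ` {1..<k}"
    proof
      assume "\<beta> k \<in> \<beta> ` {1..<k}"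
      then obtain j where "j \<in> {1..<k}" "\<beta> k = \<beta> j" by blast
      then show False using inj_onD[OF injb, of k j] that by auto
    qed
    then show ?thesis unfolding Bk_def by simp
  qed
  have prev: "\<forall>j\<in>{1..<k}. (\<alpha> j, \<beta> j) \<notin> (UNIV::'m set) \<times> Bk k" for k unfolding Bk_def by auto
  have chain: "1 \<le> k \<longrightarrow> (\<exists>G. revlex_max Ppt prec ((UNIV::'m set) \<times> Bk k) G \<and> y \<notin> G)" if "k \<le> k0" for k
    using that
  proof (induction k rule: inc_induct)
    case base
    show ?case
    proof
      assume "1 \<le> k0"
      let ?v = "(\<alpha> k0, \<beta> k0)"
      have fin: "finite ((UNIV::'m set) \<times> Bk k0)" by (intro finite_cartesian_product) simp_all
      have bk0: "\<beta> k0 \<in> Bk k0" using bkk k0(1) by blast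
      have vin: "?v \<in> (UNIV::'m set) \<times> Bk k0" using bk0 by simp
      have vmin: "\<forall>w\<in>(UNIV::'m set) \<times> Bk k0. w \<noteq> ?v \<longrightarrow> prec ?v w" using min_is[OF k0(1) prev] by blast
      obtain a1 where a1: "a1 \<noteq> \<alpha> k0"
      proof -
        have "\<not> (UNIV::'m set) \<subseteq> {\<alpha> k0}"
        proof
          assume "(UNIV::'m set) \<subseteq> {\<alpha> k0}"
          then have "card (UNIV::'m set) \<le> card {\<alpha> k0}" by (intro card_mono) simp_all
          with m1 show False by simp
        qed
        then show ?thesis using that by blast
      qed
      obtain F where F: "F facet_of convex hull (Ppt ` ((UNIV::'m set) \<times> Bk k0))" "Ppt ?v \<notin> F"
        "{w \<in> (UNIV::'m set) \<times> Bk k0. Ppt w \<in> F} = ((UNIV::'m set) - {\<alpha> k0}) \<times> Bk k0"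
        using row_facet[of "\<alpha> k0" "\<beta> k0" UNIV "Bk k0" a1] bk0 a1 by blast
      obtain G where G: "revlex_max Ppt prec (((UNIV::'m set) - {\<alpha> k0}) \<times> Bk k0) G"
        using exists_max[OF tr tot, of "UNIV - {\<alpha> k0}" "Bk k0"] a1 bk0 by blast
      have R: "revlex_max Ppt prec ((UNIV::'m set) \<times> Bk k0) (insert ?v G)"
      proof (rule revlex_max.cone)
        show "finite ((UNIV::'m set) \<times> Bk k0)" by (fact fin)
        show "2 \<le> card ((UNIV::'m set) \<times> Bk k0)" using card2[OF fin vin, of "(a1, \<beta> k0)"] bk0 a1 by simp
        show "?v \<in> (UNIV::'m set) \<times> Bk k0" by (fact vin)
        show "\<forall>w\<in>(UNIV::'m set) \<times> Bk k0. w \<noteq> ?v \<longrightarrow> prec ?v w" by (fact vmin)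
        show "F facet_of convex hull (Ppt ` ((UNIV::'m set) \<times> Bk k0))" by (fact F(1))
        show "Ppt ?v \<notin> F" by (fact F(2))
        show "revlex_max Ppt prec {w \<in> (UNIV::'m set) \<times> Bk k0. Ppt w \<in> F} G" using F(3) G by simp
      qed
      have "y \<notin> G" using revlex_sub[OF G] k0(2) by auto
      moreover have "y \<noteq> ?v" using y k0(1) by auto
      ultimately show "\<exists>G. revlex_max Ppt prec ((UNIV::'m set) \<times> Bk k0) G \<and> y \<notin> G" using R by blast
    qed
  next
    case (step n)
    show ?case
    proof
      assume n1: "1 \<le> n"
      have n: "n \<in> {1..i}" using n1 step.hyps k0 by auto
      let ?v = "(\<alpha> n, \<beta> n)"
      have fin: "finite ((UNIV::'m set) \<times> Bk n)" by (intro finite_cartesian_product) simp_all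
      have bn: "\<beta> n \<in> Bk n" using bkk n by blast
      have vin: "?v \<in> (UNIV::'m set) \<times> Bk n" using bn by simp
      have vmin: "\<forall>w\<in>(UNIV::'m set) \<times> Bk n. w \<noteq> ?v \<longrightarrow> prec ?v w" using min_is[OF n prev] by blast
      have "card (\<beta> ` {1..n}) = n"
        using card_image[OF inj_on_subset[OF injb, of "{1..n}"]] n by simp
      moreover have "n < CARD('n)" using step.hyps k0 im mn by auto
      ultimately obtain b1 where b1: "b1 \<notin> \<beta> ` {1..n}" by (metis UNIV_I less_irrefl subsetI subset_antisym)
      have b1B: "b1 \<in> Bk n" "b1 \<noteq> \<beta> n" using b1 n1 unfolding Bk_def by auto
      obtain F where F: "F facet_of convex hull (Ppt ` ((UNIV::'m set) \<times> Bk n))" "Ppt ?v \<notin> F"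
        "{w \<in> (UNIV::'m set) \<times> Bk n. Ppt w \<in> F} = (UNIV::'m set) \<times> (Bk n - {\<beta> n})"
        using col_facet[of "\<alpha> n" "\<beta> n" UNIV "Bk n" b1] bn b1B by blast
      have "Bk n - {\<beta> n} = Bk (Suc n)" unfolding Bk_def using n1 by (auto simp: less_Suc_eq)
      with F(3) have F3: "{w \<in> (UNIV::'m set) \<times> Bk n. Ppt w \<in> F} = (UNIV::'m set) \<times> Bk (Suc n)" by simp
      obtain G where G: "revlex_max Ppt prec ((UNIV::'m set) \<times> Bk (Suc n)) G" "y \<notin> G"
        using step.IH by auto
      have R: "revlex_max Ppt prec ((UNIV::'m set) \<times> Bk n) (insert ?v G)"
      proof (rule revlex_max.cone)
        show "finite ((UNIV::'m set) \<times> Bk n)" by (fact fin)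
        show "2 \<le> card ((UNIV::'m set) \<times> Bk n)" using card2[OF fin vin, of "(\<alpha> n, b1)"] b1B by simp
        show "?v \<in> (UNIV::'m set) \<times> Bk n" by (fact vin)
        show "\<forall>w\<in>(UNIV::'m set) \<times> Bk n. w \<noteq> ?v \<longrightarrow> prec ?v w" by (fact vmin)
        show "F facet_of convex hull (Ppt ` ((UNIV::'m set) \<times> Bk n))" by (fact F(1))
        show "Ppt ?v \<notin> F" by (fact F(2))
        show "revlex_max Ppt prec {w \<in> (UNIV::'m set) \<times> Bk n. Ppt w \<in> F} G" using F3 G by simp
      qed
      moreover have "y \<noteq> ?v" using y n by auto
      ultimately show "\<exists>G. revlex_max Ppt prec ((UNIV::'m set) \<times> Bk n) G \<and> y \<notin> G" using G(2) by blast
    qed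
  qed
  have "Bk 1 = UNIV" unfolding Bk_def by simp
  then show ?thesis using chain[of 1] k0(1) by simp
qed

end

theorem lemma4p12:
  fixes i :: nat
    and \<alpha> :: "nat \<Rightarrow> 'm::finite" and \<beta> :: "nat \<Rightarrow> 'n::finite"
    and prec :: "'m \<times> 'n \<Rightarrow> 'm \<times> 'n \<Rightarrow> bool"
  assumes "i \<le> CARD('m)" and "CARD('m) \<le> CARD('n)"
    and "inj_on \<alpha> {1..i}" and "inj_on \<beta> {1..i}"
    and "transp prec" and "irreflp prec"
    and "\<forall>x y. x \<noteq> y \<longrightarrow> prec x y \<or> prec y x"
    and "\<forall>k\<in>{1..i}. \<forall>l\<in>{1..i}. k < l \<longrightarrow> prec (\<alpha> k, \<beta> k) (\<alpha> l, \<beta> l)"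
    and "\<forall>k\<in>{1..i}. \<forall>x. x \<notin> (\<lambda>l. (\<alpha> l, \<beta> l)) ` {1..i} \<longrightarrow> prec (\<alpha> k, \<beta> k) x"
  shows "(\<forall>k\<in>{1..i}. cone_point (revlex_complex Ppt prec UNIV) (\<alpha> k, \<beta> k))
       \<and> (i = CARD('m) \<and> CARD('m) > 1 \<longrightarrow>
            delete_vertices (revlex_complex Ppt prec UNIV) ((\<lambda>l. (\<alpha> l, \<beta> l)) ` {1..i})
            = core (revlex_complex Ppt prec UNIV))"
proof -
  interpret LS i \<alpha> \<beta> prec
    by (rule LS.intro) (use assms in auto)
  define X where "X = (\<lambda>l. (\<alpha> l, \<beta> l)) ` {1..i}"
  define D where "D = revlex_complex Ppt prec (UNIV :: ('m \<times> 'n) set)"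
  define Ms where "Ms = {G. revlex_max Ppt prec (UNIV :: ('m \<times> 'n) set) G}"
  have DM: "D = complex_of Ms" unfolding revlex_complex_def Ms_def D_def ..
  have U: "(UNIV :: ('m \<times> 'n) set) = (UNIV::'m set) \<times> (UNIV::'n set)" by simp
  have cardM: "card G + 1 = CARD('m) + CARD('n)" if "G \<in> Ms" for G
    using card_max[of prec UNIV G UNIV UNIV] that unfolding Ms_def by simp
  have finM: "finite G" if "G \<in> Ms" for G using revlex_sub that unfolding Ms_def by blast
  have exM: "\<exists>G. G \<in> Ms"
    using exists_max[OF tr tot, of "UNIV::'m set" "UNIV::'n set"] unfolding Ms_def by simp
  have contM: "\<forall>k\<in>{1..i}. (\<alpha> k, \<beta> k) \<in> G" if "G \<in> Ms" for G
    using contains[of UNIV G "UNIV::'m set" "UNIV::'n set" 1] that unfolding Ms_def by simp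
  have facets_eq: "facets D = Ms"
  proof
    show "facets D \<subseteq> Ms"
    proof
      fix F assume F: "F \<in> facets D"
      then have "F \<in> D" unfolding facets_def by simp
      then obtain G where G: "G \<in> Ms" "F \<subseteq> G" unfolding DM complex_of_def by blast
      have "G \<in> D" using G(1) unfolding DM complex_of_def by blast
      then have "G = F" using F G(2) unfolding facets_def by blast
      then show "F \<in> Ms" using G by simp
    qed
    show "Ms \<subseteq> facets D"
    proof
      fix G assume G: "G \<in> Ms"
      have "G \<in> D" using G unfolding DM complex_of_def by blast
      moreover have "\<forall>H\<in>D. G \<subseteq> H \<longrightarrow> H = G"
      proof (intro ballI impI)
        fix H assume H: "H \<in> D" "G \<subseteq> H"
        then obtain G' where G': "G' \<in> Ms" "H \<subseteq> G'" unfolding DM complex_of_def by blast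
        have "G \<subseteq> G'" using H G' by blast
        moreover have "card G = card G'" using cardM[OF G] cardM[OF G'(1)] by simp
        ultimately have "G = G'" using card_subset_eq[OF finM[OF G'(1)]] by blast
        then show "H = G" using H G' by blast
      qed
      ultimately show "G \<in> facets D" unfolding facets_def by blast
    qed
  qed
  have vert: "v \<in> vertices D \<longleftrightarrow> (\<exists>G\<in>Ms. v \<in> G)" for v
    unfolding vertices_def DM complex_of_def by auto
  have cone_iff: "cone_point D v \<longleftrightarrow> (\<exists>G\<in>Ms. v \<in> G) \<and> (\<forall>G\<in>Ms. v \<in> G)" for v
    unfolding cone_point_def vert facets_eq by simp
  have part1: "\<forall>k\<in>{1..i}. cone_point D (\<alpha> k, \<beta> k)" using cone_iff contM exM by blast
  have part2: "delete_vertices D X = core D" if h: "i = CARD('m)" "CARD('m) > 1"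
  proof (rule set_eqI)
    fix \<sigma>
    show "\<sigma> \<in> delete_vertices D X \<longleftrightarrow> \<sigma> \<in> core D"
    proof (cases "\<sigma> \<in> D")
      case False
      then show ?thesis unfolding delete_vertices_def core_def restrict_complex_def by simp
    next
      case True
      then obtain G where G: "G \<in> Ms" "\<sigma> \<subseteq> G" unfolding DM complex_of_def by blast
      have "\<sigma> \<inter> X = {} \<longleftrightarrow> \<sigma> \<subseteq> {v \<in> vertices D. \<not> cone_point D v}"
      proof
        assume dis: "\<sigma> \<inter> X = {}"
        show "\<sigma> \<subseteq> {v \<in> vertices D. \<not> cone_point D v}"
        proof
          fix w assume w: "w \<in> \<sigma>"
          have "w \<notin> X" using dis w by blast
          then obtain G' where "G' \<in> Ms" "w \<notin> G'"
            using avoid[OF h(1) h(2) assms(2)] unfolding Ms_def X_def by blast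
          then have "\<not> cone_point D w" using cone_iff by blast
          moreover have "w \<in> vertices D" using vert G w by blast
          ultimately show "w \<in> {v \<in> vertices D. \<not> cone_point D v}" by simp
        qed
      next
        assume sub: "\<sigma> \<subseteq> {v \<in> vertices D. \<not> cone_point D v}"
        show "\<sigma> \<inter> X = {}" using sub part1 unfolding X_def by blast
      qed
      then show ?thesis unfolding delete_vertices_def core_def restrict_complex_def using True by simp
    qed
  qed
  show ?thesis using part1 part2 unfolding D_def X_def by blast
qed

end
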